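(* Let $n$, $k$, $t$ be positive integers with $k\geq t+1$ and $n\geq 2k$, and let $V$ be an $n$-dimensional vector space over $\mathbb{F}_q$. Suppose $\mathcal{F}\subseteq{V\brack k}$ is a maximal (with respect to inclusion) almost $t$-intersecting family with $\tau_t(\mathcal{F})\leq k$. If $\mathcal{T}$ is the set of all $t$-covers of $\mathcal{F}$ of dimension $\tau_t(\mathcal{F})$, then $\mathcal{T}$ is $t$-intersecting, i.e. $\dim(T_1\cap T_2)\geq t$ for all $T_1,T_2\in\mathcal{T}$.
   Context: $q$ is a prime power; ${W\brack k}$ is the set of $k$-dimensional subspaces of $W$. A family $\mathcal{F}\subseteq{V\brack k}$ is almost $t$-intersecting if for each $F\in\mathcal{F}$ there is at most one $F'\in\mathcal{F}$ with $\dim(F\cap F')<t$. A subspace $W$ is a $t$-cover of $\mathcal{F}$ if $\dim(W\cap F)\geq t$ for all $F\in\mathcal{F}$; $\tau_t(\mathcal{F})$ is the minimum dimension of a $t$-cover of $\mathcal{F}$. *)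

theory Defs
  imports "HOL-Analysis.Cartesian_Space"
begin

text \<open>The ambient space V is the n-dimensional space 'a^'n over a finite field 'a
  (so 'a is F_q with q a prime power), n = CARD('n).\<close>

definition gr :: "nat \<Rightarrow> ('a::field ^ 'n) set set" where
  "gr k = {W. vec.subspace W \<and> vec.dim W = k}"

definition almost_t_intersecting :: "nat \<Rightarrow> ('a::field ^ 'n) set set \<Rightarrow> bool" where
  "almost_t_intersecting t \<F> \<longleftrightarrow>
     (\<forall>F\<in>\<F>. card {F'\<in>\<F>. vec.dim (F \<inter> F') < t} \<le> 1)"

definition t_cover :: "nat \<Rightarrow> ('a::field ^ 'n) set set \<Rightarrow> ('a ^ 'n) set \<Rightarrow> bool" where
  "t_cover t \<F> W \<longleftrightarrow> vec.subspace W \<and> (\<forall>F\<in>\<F>. vec.dim (W \<inter> F) \<ge> t)"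

definition tau :: "nat \<Rightarrow> ('a::field ^ 'n) set set \<Rightarrow> nat" where
  "tau t \<F> = (LEAST d. \<exists>W. t_cover t \<F> W \<and> vec.dim W = d)"

definition maximal_almost_t_intersecting :: "nat \<Rightarrow> nat \<Rightarrow> ('a::field ^ 'n) set set \<Rightarrow> bool" where
  "maximal_almost_t_intersecting k t \<F> \<longleftrightarrow>
     \<F> \<subseteq> gr k \<and> almost_t_intersecting t \<F> \<and>
     (\<forall>\<G>. \<F> \<subset> \<G> \<and> \<G> \<subseteq> gr k \<longrightarrow> \<not> almost_t_intersecting t \<G>)"

end

theory Submission
  imports Defs
begin

lemma span_inter_sub:
  assumes indU: "vec.independent (U :: ('a::field ^ 'n) set)"
    and A: "A \<subseteq> U" and B: "B \<subseteq> U"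
    and x1: "x \<in> vec.span A" and x2: "x \<in> vec.span B"
  shows "x \<in> vec.span (A \<inter> B)"
proof -
  let ?R = "vec.representation U x"
  have RA: "?R = vec.representation A x" using vec.representation_extend[OF indU x1 A] .
  have RB: "?R = vec.representation B x" using vec.representation_extend[OF indU x2 B] .
  have indA: "vec.independent A" using indU A vec.independent_mono by blast
  have nz: "b \<in> A \<inter> B" if "?R b \<noteq> 0" for b
    using that RA RB vec.representation_ne_zero[of A x b] vec.representation_ne_zero[of B x b] by auto
  have "x = (\<Sum>b | vec.representation A x b \<noteq> 0. vec.representation A x b *s b)"
    using vec.sum_nonzero_representation_eq[OF indA x1] by simp
  also have "\<dots> \<in> vec.span (A \<inter> B)"
    by (rule vec.span_sum, rule vec.span_scale, rule vec.span_base) (use nz RA in auto)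
  finally show ?thesis .
qed

lemma k_space_in:
  assumes max: "maximal_almost_t_intersecting k t \<F>"
    and cov: "t_cover t \<F> T" and kt: "t \<le> k"
    and G: "G \<in> gr k" and TG: "T \<subseteq> G"
  shows "G \<in> \<F>"
proof (rule ccontr)
  assume nG: "G \<notin> \<F>"
  have sub: "\<F> \<subseteq> gr k" and ai: "almost_t_intersecting t \<F>"
    using max unfolding maximal_almost_t_intersecting_def by auto
  have big: "vec.dim (G \<inter> F) \<ge> t" if "F \<in> \<F>" for F
  proof -
    have "vec.dim (T \<inter> F) \<ge> t" using cov that unfolding t_cover_def by auto
    moreover have "vec.dim (T \<inter> F) \<le> vec.dim (G \<inter> F)" using TG by (intro vec.dim_subset) auto
    ultimately show ?thesis by simp
  qed
  have "almost_t_intersecting t (insert G \<F>)"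
    unfolding almost_t_intersecting_def
  proof
    fix F assume F: "F \<in> insert G \<F>"
    show "card {F' \<in> insert G \<F>. vec.dim (F \<inter> F') < t} \<le> 1"
    proof (cases "F = G")
      case True
      have "vec.dim (G \<inter> G) = k" using G unfolding gr_def by simp
      have "\<forall>F'\<in>insert G \<F>. t \<le> vec.dim (G \<inter> F')" using big kt \<open>vec.dim (G \<inter> G) = k\<close> by auto
      hence e: "{F' \<in> insert G \<F>. vec.dim (F \<inter> F') < t} = {}" using True by (auto simp: not_less[symmetric])
      show ?thesis unfolding e by simp
    next
      case False
      hence FF: "F \<in> \<F>" using F by auto
      have "vec.dim (F \<inter> G) \<ge> t" using big[OF FF] by (simp add: Int_commute)
      hence "{F' \<in> insert G \<F>. vec.dim (F \<inter> F') < t} = {F' \<in> \<F>. vec.dim (F \<inter> F') < t}"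
        by auto
      then show ?thesis using ai FF unfolding almost_t_intersecting_def by simp
    qed
  qed
  moreover have "\<F> \<subset> insert G \<F>" using nG by auto
  moreover have "insert G \<F> \<subseteq> gr k" using sub G by auto
  ultimately show False using max unfolding maximal_almost_t_intersecting_def by blast
qed

theorem lemma5p2:
  fixes \<F> :: "('a::{field,finite} ^ 'n) set set"
    and n k t :: nat
  assumes "n = CARD('n)"
    and "0 < t" and "0 < k" and "k \<ge> t + 1" and "n \<ge> 2 * k"
    and "maximal_almost_t_intersecting k t \<F>"
    and "tau t \<F> \<le> k"
  shows "\<forall>T1 \<in> {T. t_cover t \<F> T \<and> vec.dim T = tau t \<F>}.
         \<forall>T2 \<in> {T. t_cover t \<F> T \<and> vec.dim T = tau t \<F>}.
           vec.dim (T1 \<inter> T2) \<ge> t"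
proof (intro ballI, rule ccontr)
  fix T1 T2
  assume T1: "T1 \<in> {T. t_cover t \<F> T \<and> vec.dim T = tau t \<F>}"
    and T2: "T2 \<in> {T. t_cover t \<F> T \<and> vec.dim T = tau t \<F>}"
    and small: "\<not> t \<le> vec.dim (T1 \<inter> T2)"
  define \<tau> where "\<tau> = tau t \<F>"
  have c1: "t_cover t \<F> T1" and d1: "vec.dim T1 = \<tau>"
    and c2: "t_cover t \<F> T2" and d2: "vec.dim T2 = \<tau>"
    using T1 T2 \<tau>_def by auto
  have s1: "vec.subspace T1" and s2: "vec.subspace T2"
    using c1 c2 unfolding t_cover_def by auto
  have tk: "\<tau> \<le> k" using assms(7) \<tau>_def by simp
  obtain b1 where b1: "b1 \<subseteq> T1" "vec.independent b1" "T1 \<subseteq> vec.span b1" "card b1 = \<tau>"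
    using vec.basis_exists[of T1] d1 by metis
  obtain b2 where b2: "b2 \<subseteq> T2" "vec.independent b2" "T2 \<subseteq> vec.span b2" "card b2 = \<tau>"
    using vec.basis_exists[of T2] d2 by metis
  have fb1: "finite b1" and fb2: "finite b2" by auto
  have span2: "vec.span b2 = T2" using vec.span_subspace[OF b2(1) b2(3) s2] .
  obtain bS where bS: "b2 \<subseteq> bS" "bS \<subseteq> b1 \<union> b2" "vec.independent bS" "b1 \<union> b2 \<subseteq> vec.span bS"
    using vec.maximal_independent_subset_extend[of b2 "b1 \<union> b2"] b2(2) by blast
  have cS: "card bS \<le> 2 * \<tau>"
  proof -
    have "card bS \<le> card (b1 \<union> b2)" using bS(2) by (intro card_mono) auto
    also have "\<dots> \<le> card b1 + card b2" by (rule card_Un_le)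
    finally show ?thesis using b1(4) b2(4) by simp
  qed
  obtain bU where bU: "bS \<subseteq> bU" "vec.independent bU" "UNIV \<subseteq> vec.span bU"
  proof -
    obtain B where "bS \<subseteq> B" "B \<subseteq> UNIV" "vec.independent B" "UNIV \<subseteq> vec.span B"
      by (rule vec.maximal_independent_subset_extend[OF subset_UNIV bS(3)])
    then show ?thesis using that by simp
  qed
  have cU: "card bU = n"
  proof -
    have "card bU = vec.dim (UNIV :: ('a ^ 'n) set)"
      using vec.basis_card_eq_dim[OF subset_UNIV bU(3) bU(2)] .
    also have "\<dots> = CARD('n)" by (simp add: card_cart_basis)
    finally show ?thesis using assms(1) by simp
  qed
  have fU: "finite bU" using vec.finiteI_independent bU(2) by blast
  have "card (bU - bS) = n - card bS" using cU bU(1) fU by (simp add: card_Diff_subset finite_subset)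
  hence "k - \<tau> \<le> card (bU - bS)" using cS assms(5) tk by linarith
  then obtain D where D: "D \<subseteq> bU - bS" "card D = k - \<tau>" "finite D"
    using obtain_subset_with_card_n by metis
  define G where "G = vec.span (b2 \<union> D)"
  have indG: "vec.independent (b2 \<union> D)"
  proof -
    have "b2 \<union> D \<subseteq> bU" using D(1) bS(1) bU(1) by auto
    then show ?thesis using vec.independent_mono[OF bU(2)] by blast
  qed
  have "card (b2 \<union> D) = card b2 + card D"
    using D bS(1) by (intro card_Un_disjoint) auto
  hence dG: "vec.dim G = k" unfolding G_def using vec.dim_span_eq_card_independent[OF indG]
    b2(4) D(2) tk by simp
  have Gk: "G \<in> gr k" unfolding gr_def G_def using dG G_def vec.subspace_span by auto
  have TG: "T2 \<subseteq> G" unfolding G_def using span2 vec.span_mono[of b2 "b2 \<union> D"] by auto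
  have GF: "G \<in> \<F>" using k_space_in[OF assms(6) c2 _ Gk TG] assms(4) by simp
  have big: "vec.dim (T1 \<inter> G) \<ge> t" using c1 GF unfolding t_cover_def by auto
  have "T1 \<inter> G \<subseteq> T1 \<inter> T2"
  proof
    fix x assume x: "x \<in> T1 \<inter> G"
    have "b1 \<subseteq> vec.span bS" using bS(4) by auto
    hence "vec.span b1 \<subseteq> vec.span bS" by (rule vec.span_minimal[OF _ vec.subspace_span])
    hence "x \<in> vec.span bS" using x b1(3) by blast
    moreover have "x \<in> vec.span (b2 \<union> D)" using x G_def by simp
    ultimately have "x \<in> vec.span ((b2 \<union> D) \<inter> bS)"
      using span_inter_sub[OF bU(2), of "b2 \<union> D" bS x] bU(1) D(1) bS(1) by blast
    moreover have "(b2 \<union> D) \<inter> bS = b2" using D(1) bS(1) by auto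
    ultimately show "x \<in> T1 \<inter> T2" using span2 x by auto
  qed
  hence "vec.dim (T1 \<inter> G) \<le> vec.dim (T1 \<inter> T2)" by (rule vec.dim_subset)
  thus False using big small by simp
qed

end
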